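(* Let $f:\mathbb{R}^n\to\mathbb{R}$ be differentiable with $L$-Lipschitz gradient in the Euclidean norm, i.e. $\|\nabla f(y)-\nabla f(x)\|\le L\|y-x\|$ for all $x,y$ (some $L>0$), and satisfy the Polyak--Łojasiewicz condition $f(x)-f^*\le \frac{1}{2\mu}\|\nabla f(x)\|^2$ for all $x\in\mathbb{R}^n$, with some $\mu>0$, where $f^*=f(x^* )$ for a minimizer $x^*$ of $f$. Suppose that an inexact gradient $\tilde\nabla f(x)$ is available satisfying $\|\tilde\nabla f(x)-\nabla f(x)\|\le \alpha\|\nabla f(x)\|$ for all $x$, with a known $\alpha\in[0,0.5)$. Let $\varepsilon>0$, and set $\xi=(1-2\alpha)^2$ and $L_{max}=2L$. Run Algorithm 1 (described in the context) and suppose one of the following holds: (1) the algorithm has performed $N_*$ iterations, where $N_*=\left\lceil \frac{L_{max}}{\mu\xi}\log\left(\frac{\mu(f(x^0)-f^* )}{\varepsilon}\right)\right\rceil$; or (2) for some $N<N_*$ the stopping rule $\|\tilde\nabla f(x^N)\|^2\le 2\varepsilon(1-\alpha)^2$ holds. Then the output point $\hat x$ (namely $\hat x=x^{N_*}$ in case (1), $\hat x=x^N$ in case (2)) satisfies $$f(\hat x)-f^*\le\frac{\varepsilon}{\mu}\quad\text{and}\quad \|\hat x-x^0\|\le \frac{2L_{max}}{\mu\xi}\sqrt{\frac{2}{L_{min}}\bigl(f(x^0)-f^*\bigr)}.$$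
   Context: Algorithm 1 (gradient descent with adaptive tuning of $L$). Input: $x^0\in\mathbb{R}^n$, constants $L_{min}\ge\mu>0$, $L_0\ge L_{min}$, and $\alpha\in[0,0.5)$. Step 1: set $k=0$. Step 2: set $L_{k+1}=\max\{L_k/2,\,L_{min}\}$. Step 3: set $x^{k+1}=x^k-\frac{1}{L_{k+1}}\frac{1-2\alpha}{1-\alpha}\tilde\nabla f(x^k)$. Step 4: if $$f(x^{k+1})\le f(x^k)+\langle\tilde\nabla f(x^k),x^{k+1}-x^k\rangle+\frac{L_{k+1}}{2}\|x^{k+1}-x^k\|^2+\frac{\alpha}{1-\alpha}\|\tilde\nabla f(x^k)\|\,\|x^{k+1}-x^k\|,$$ go to Step 5; otherwise replace $L_{k+1}$ by $2L_{k+1}$ and return to Step 3. Step 5: if the stopping rule is not satisfied, set $k:=k+1$ and go to Step 2. Output: $x^k$. Here $\log$ is the natural logarithm and $\|\cdot\|$ the Euclidean norm. *)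

theory Defs
  imports "HOL-Analysis.Analysis"
begin

text \<open>Algorithm 1 (gradient descent with adaptive tuning of L), with inexact
  gradient gt.  Step 3 trial point for a given trial constant Lt.\<close>

definition gd_step :: "('a::real_inner \<Rightarrow> 'a) \<Rightarrow> real \<Rightarrow> 'a \<Rightarrow> real \<Rightarrow> 'a" where
  "gd_step gt \<alpha> x Lt = x - ((1 / Lt) * ((1 - 2*\<alpha>) / (1 - \<alpha>))) *\<^sub>R gt x"

definition gd_accept :: "('a::real_inner \<Rightarrow> real) \<Rightarrow> ('a \<Rightarrow> 'a) \<Rightarrow> real \<Rightarrow> 'a \<Rightarrow> real \<Rightarrow> bool" where
  "gd_accept f gt \<alpha> x Lt =
     (let y = gd_step gt \<alpha> x Lt in
      f y \<le> f x + inner (gt x) (y - x) + Lt / 2 * (norm (y - x))^2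
              + \<alpha> / (1 - \<alpha>) * norm (gt x) * norm (y - x))"

definition gd_nextL :: "('a::real_inner \<Rightarrow> real) \<Rightarrow> ('a \<Rightarrow> 'a) \<Rightarrow> real \<Rightarrow> real \<Rightarrow> 'a \<Rightarrow> real \<Rightarrow> real" where
  "gd_nextL f gt \<alpha> Lmin x Lk =
     (let Lt = max (Lk / 2) Lmin in Lt * 2 ^ (LEAST i. gd_accept f gt \<alpha> x (Lt * 2 ^ i)))"

primrec gd_state :: "('a::real_inner \<Rightarrow> real) \<Rightarrow> ('a \<Rightarrow> 'a) \<Rightarrow> real \<Rightarrow> real \<Rightarrow> 'a \<Rightarrow> real \<Rightarrow> nat \<Rightarrow> 'a \<times> real" where
  "gd_state f gt \<alpha> Lmin x0 L0 0 = (x0, L0)"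
| "gd_state f gt \<alpha> Lmin x0 L0 (Suc k) =
     (let (x, Lk) = gd_state f gt \<alpha> Lmin x0 L0 k;
          L' = gd_nextL f gt \<alpha> Lmin x Lk
      in (gd_step gt \<alpha> x L', L'))"

definition gd_iter :: "('a::real_inner \<Rightarrow> real) \<Rightarrow> ('a \<Rightarrow> 'a) \<Rightarrow> real \<Rightarrow> real \<Rightarrow> 'a \<Rightarrow> real \<Rightarrow> nat \<Rightarrow> 'a" where
  "gd_iter f gt \<alpha> Lmin x0 L0 k = fst (gd_state f gt \<alpha> Lmin x0 L0 k)"

end

theory Submission imports Defs begin

lemma descent_lemma:
  fixes f :: "'a::real_inner \<Rightarrow> real" and grad :: "'a \<Rightarrow> 'a"
  assumes deriv: "\<And>x. (f has_derivative (\<lambda>h. inner (grad x) h)) (at x)"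
    and lip: "\<And>x y. norm (grad y - grad x) \<le> L * norm (y - x)"
  shows "f y \<le> f x + inner (grad x) (y - x) + L/2 * (norm (y-x))^2"
proof -
  define d where "d = y - x"
  define \<phi> where "\<phi> t = f (x + t *\<^sub>R d) - t * inner (grad x) d - L/2 * t^2 * (norm d)^2" for t
  have D: "DERIV \<phi> t :> inner (grad (x + t *\<^sub>R d)) d - inner (grad x) d - L * t * (norm d)^2" for t
  proof -
    have l: "((\<lambda>t. x + t *\<^sub>R d) has_derivative (\<lambda>s. s *\<^sub>R d)) (at t)"
      by (auto intro!: derivative_eq_intros)
    have c: "((\<lambda>t. f (x + t *\<^sub>R d)) has_derivative (\<lambda>s. inner (grad (x + t *\<^sub>R d)) (s *\<^sub>R d))) (at t)"
      using has_derivative_compose[OF l deriv] by (simp add: o_def)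
    have c': "((\<lambda>t. f (x + t *\<^sub>R d)) has_field_derivative inner (grad (x + t *\<^sub>R d)) d) (at t)"
      by (rule has_derivative_imp_has_field_derivative[OF c]) (simp add: mult.commute)
    show ?thesis unfolding \<phi>_def
      by (rule derivative_eq_intros c' | simp)+ 
  qed
  have "\<phi> 1 \<le> \<phi> 0"
  proof (rule DERIV_nonpos_imp_nonincreasing[of 0 1 \<phi>])
    fix t :: real assume t: "0 \<le> t" "t \<le> 1"
    have "inner (grad (x + t *\<^sub>R d)) d - inner (grad x) d = inner (grad (x + t *\<^sub>R d) - grad x) d"
      by (simp add: inner_diff_left)
    also have "\<dots> \<le> norm (grad (x + t *\<^sub>R d) - grad x) * norm d" by (rule norm_cauchy_schwarz)
    also have "\<dots> \<le> (L * norm (t *\<^sub>R d)) * norm d"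
      using lip[where x=x and y="x + t *\<^sub>R d"] by (metis add_diff_cancel_left' mult_right_mono norm_ge_zero)
    also have "\<dots> = L * t * (norm d)^2" using t by (simp add: power2_eq_square)
    finally show "\<exists>y. DERIV \<phi> t :> y \<and> y \<le> 0" using D[of t] by (intro exI[of _ _]) auto
  qed simp
  then show ?thesis unfolding \<phi>_def d_def by simp
qed


lemma grad_le_gt:
  fixes grad gt :: "'a::real_inner \<Rightarrow> 'a"
  assumes inexact: "norm (gt z - grad z) \<le> \<alpha> * norm (grad z)" and a: "\<alpha> < 1"
  shows "(1 - \<alpha>) * norm (grad z) \<le> norm (gt z)"
proof -
  have "norm (grad z) \<le> norm (gt z) + norm (gt z - grad z)"
    using norm_triangle_ineq4[of "gt z" "gt z - grad z"] by simp
  with inexact show ?thesis by (simp add: algebra_simps)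
qed

lemma accept_large:
  fixes f :: "'a::real_inner \<Rightarrow> real" and grad gt :: "'a \<Rightarrow> 'a"
  assumes deriv: "\<And>x. (f has_derivative (\<lambda>h. inner (grad x) h)) (at x)"
    and lip: "\<And>x y. norm (grad y - grad x) \<le> L * norm (y - x)"
    and inexact: "\<And>x. norm (gt x - grad x) \<le> \<alpha> * norm (grad x)"
    and a: "0 \<le> \<alpha>" "\<alpha> < 1/2" and LLt: "L \<le> Lt"
  shows "gd_accept f gt \<alpha> z Lt"
proof -
  define y where "y = gd_step gt \<alpha> z Lt"
  define d where "d = y - z"
  have ds: "f y \<le> f z + inner (grad z) d + L/2 * (norm d)^2"
    unfolding d_def by (rule descent_lemma[OF deriv lip])
  have "inner (grad z) d = inner (gt z) d + inner (grad z - gt z) d"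
    by (simp add: inner_diff_left)
  also have "inner (grad z - gt z) d \<le> norm (grad z - gt z) * norm d" by (rule norm_cauchy_schwarz)
  also have "\<dots> \<le> (\<alpha> * norm (grad z)) * norm d"
    using inexact[of z] by (intro mult_right_mono) (auto simp: norm_minus_commute)
  also have "\<alpha> * norm (grad z) \<le> \<alpha> / (1 - \<alpha>) * norm (gt z)"
  proof -
    have "(1 - \<alpha>) * norm (grad z) \<le> norm (gt z)" using grad_le_gt[where gt=gt and grad=grad and z=z, OF inexact[of z]] a by simp
    then have "norm (grad z) \<le> norm (gt z) / (1 - \<alpha>)" using a by (simp add: field_simps)
    then have "\<alpha> * norm (grad z) \<le> \<alpha> * (norm (gt z) / (1 - \<alpha>))" using a by (intro mult_left_mono) auto
    then show ?thesis by simp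
  qed
  finally have i: "inner (grad z) d \<le> inner (gt z) d + \<alpha> / (1 - \<alpha>) * norm (gt z) * norm d"
    by (simp add: mult_right_mono)
  have "L/2 * (norm d)^2 \<le> Lt/2 * (norm d)^2" using LLt by (intro mult_right_mono) auto
  with ds i show ?thesis unfolding gd_accept_def Let_def y_def[symmetric] d_def by linarith
qed

lemma accept_step:
  fixes f :: "'a::real_inner \<Rightarrow> real" and gt :: "'a \<Rightarrow> 'a"
  assumes acc: "gd_accept f gt \<alpha> z Lt" and Lt: "Lt > 0" and a: "0 \<le> \<alpha>" "\<alpha> < 1/2"
  shows "f (gd_step gt \<alpha> z Lt) \<le> f z - ((1 - 2*\<alpha>) / (1 - \<alpha>))^2 * (norm (gt z))^2 / (2 * Lt)"
    and "norm (gd_step gt \<alpha> z Lt - z) = ((1 - 2*\<alpha>) / (1 - \<alpha>)) * norm (gt z) / Lt"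
proof -
  define c where "c = (1 - 2*\<alpha>) / (1 - \<alpha>)"
  have c: "c > 0" using a unfolding c_def by (auto intro: divide_pos_pos)
  define h where "h = (1 / Lt) * c"
  have h: "h > 0" using c Lt unfolding h_def by simp
  have yd: "gd_step gt \<alpha> z Lt - z = - (h *\<^sub>R gt z)" unfolding gd_step_def h_def c_def by simp
  have n: "norm (gd_step gt \<alpha> z Lt - z) = h * norm (gt z)" using h by (simp add: yd)
  have inn: "inner (gt z) (gd_step gt \<alpha> z Lt - z) = - h * (norm (gt z))^2"
    by (simp add: yd power2_norm_eq_inner)
  have "f (gd_step gt \<alpha> z Lt) \<le> f z - h * (norm (gt z))^2 + Lt/2 * (h * norm (gt z))^2
      + \<alpha> / (1 - \<alpha>) * norm (gt z) * (h * norm (gt z))"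
    using acc unfolding gd_accept_def Let_def n inn by simp
  also have "\<dots> = f z - c^2 * (norm (gt z))^2 / (2 * Lt)"
  proof -
    define G where "G = (norm (gt z))^2"
    have Lh: "Lt * h = c" using Lt unfolding h_def by simp
    have ac: "-1 + \<alpha> / (1 - \<alpha>) = - c" using a unfolding c_def by (simp add: field_simps)
    have "- h * (norm (gt z))^2 + Lt/2 * (h * norm (gt z))^2
      + \<alpha> / (1 - \<alpha>) * norm (gt z) * (h * norm (gt z)) = h * G * ((-1 + \<alpha> / (1 - \<alpha>)) + (Lt * h) / 2)"
      unfolding G_def by (simp add: power2_eq_square algebra_simps)
    also have "\<dots> = - (c / Lt) * c * G / 2" unfolding Lh ac h_def by (simp add: algebra_simps)
    finally show ?thesis unfolding G_def by (simp add: power2_eq_square)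
  qed
  finally show "f (gd_step gt \<alpha> z Lt) \<le> f z - ((1 - 2*\<alpha>) / (1 - \<alpha>))^2 * (norm (gt z))^2 / (2 * Lt)"
    unfolding c_def .
  show "norm (gd_step gt \<alpha> z Lt - z) = ((1 - 2*\<alpha>) / (1 - \<alpha>)) * norm (gt z) / Lt"
    unfolding n h_def c_def by simp
qed

lemma nextL_props:
  fixes f :: "'a::real_inner \<Rightarrow> real" and gt :: "'a \<Rightarrow> 'a"
  assumes large: "\<And>Lt. L \<le> Lt \<Longrightarrow> gd_accept f gt \<alpha> z Lt"
    and Lmin: "0 < Lmin" "Lmin \<le> 2 * L" and Lk: "Lk \<le> 2 * L" and L: "L > 0"
  shows "Lmin \<le> gd_nextL f gt \<alpha> Lmin z Lk" "gd_nextL f gt \<alpha> Lmin z Lk \<le> 2 * L"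
    "gd_accept f gt \<alpha> z (gd_nextL f gt \<alpha> Lmin z Lk)"
proof -
  define Lt where "Lt = max (Lk / 2) Lmin"
  define i where "i = (LEAST i. gd_accept f gt \<alpha> z (Lt * 2 ^ i))"
  have eq: "gd_nextL f gt \<alpha> Lmin z Lk = Lt * 2 ^ i" unfolding gd_nextL_def Let_def Lt_def i_def by simp
  have Ltpos: "Lt > 0" using Lmin unfolding Lt_def by simp
  obtain n where n: "L / Lt < 2 ^ n" using real_arch_pow[of 2 "L / Lt"] by auto
  have "L \<le> Lt * 2 ^ n" using n Ltpos by (simp add: field_simps)
  then have ex: "\<exists>i. gd_accept f gt \<alpha> z (Lt * 2 ^ i)" using large by blast
  show "gd_accept f gt \<alpha> z (gd_nextL f gt \<alpha> Lmin z Lk)"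
    unfolding eq i_def by (rule LeastI_ex[OF ex])
  have "(1::real) \<le> 2 ^ i" by simp
  then have "Lt \<le> Lt * 2 ^ i" using Ltpos by simp
  then show "Lmin \<le> gd_nextL f gt \<alpha> Lmin z Lk" unfolding eq Lt_def by simp
  show "gd_nextL f gt \<alpha> Lmin z Lk \<le> 2 * L"
  proof (rule ccontr)
    assume A: "\<not> ?thesis"
    show False
    proof (cases i)
      case 0
      have "Lt \<le> 2 * L" using Lmin Lk L unfolding Lt_def by simp
      with A 0 eq show False by simp
    next
      case (Suc j)
      have "L \<le> Lt * 2 ^ j" using A eq Suc by simp
      then have "gd_accept f gt \<alpha> z (Lt * 2 ^ j)" by (rule large)
      moreover have "\<not> gd_accept f gt \<alpha> z (Lt * 2 ^ j)"
        using not_less_Least[of j "\<lambda>i. gd_accept f gt \<alpha> z (Lt * 2 ^ i)"] Suc unfolding i_def by simp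
      ultimately show False by simp
    qed
  qed
qed


theorem theorem1:
  fixes f :: "real ^ 'n \<Rightarrow> real"
    and grad gt :: "real ^ 'n \<Rightarrow> real ^ 'n"
    and xstar x0 :: "real ^ 'n"
    and L \<mu> \<alpha> \<epsilon> Lmin L0 :: real
  assumes deriv: "\<And>x. (f has_derivative (\<lambda>h. inner (grad x) h)) (at x)"
    and Lpos: "L > 0"
    and lip: "\<And>x y. norm (grad y - grad x) \<le> L * norm (y - x)"
    and mupos: "\<mu> > 0"
    and minimizer: "\<And>x. f xstar \<le> f x"
    and PL: "\<And>x. f x - f xstar \<le> 1 / (2 * \<mu>) * (norm (grad x))^2"
    and alpha: "0 \<le> \<alpha>" "\<alpha> < 1/2"
    and inexact: "\<And>x. norm (gt x - grad x) \<le> \<alpha> * norm (grad x)"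
    and eps: "\<epsilon> > 0"
    and Lmin: "Lmin \<ge> \<mu>"
    and L0: "L0 \<ge> Lmin" "L0 \<le> 2 * L"
  defines "x \<equiv> gd_iter f gt \<alpha> Lmin x0 L0"
    and "Nstar \<equiv> nat \<lceil>(2 * L) / (\<mu> * (1 - 2*\<alpha>)^2) * ln (\<mu> * (f x0 - f xstar) / \<epsilon>)\<rceil>"
    and "R \<equiv> 2 * (2 * L) / (\<mu> * (1 - 2*\<alpha>)^2) * sqrt (2 / Lmin * (f x0 - f xstar))"
  shows "(f (x Nstar) - f xstar \<le> \<epsilon> / \<mu> \<and> norm (x Nstar - x0) \<le> R)
       \<and> (\<forall>N < Nstar. (norm (gt (x N)))^2 \<le> 2 * \<epsilon> * (1 - \<alpha>)^2 \<longrightarrow>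
            f (x N) - f xstar \<le> \<epsilon> / \<mu> \<and> norm (x N - x0) \<le> R)"
proof -
  define Ls where "Ls k = snd (gd_state f gt \<alpha> Lmin x0 L0 k)" for k
  have x0': "x 0 = x0" unfolding x_def gd_iter_def by simp
  have recx: "x (Suc k) = gd_step gt \<alpha> (x k) (Ls (Suc k))" for k
    unfolding x_def gd_iter_def Ls_def by (simp add: Let_def split_beta)
  have recL: "Ls (Suc k) = gd_nextL f gt \<alpha> Lmin (x k) (Ls k)" for k
    unfolding x_def gd_iter_def Ls_def by (simp add: Let_def split_beta)
  have Lminpos: "Lmin > 0" using Lmin mupos by simp
  have Lmin2L: "Lmin \<le> 2 * L" using L0 by simp
  have large: "\<And>z Lt. L \<le> Lt \<Longrightarrow> gd_accept f gt \<alpha> z Lt"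
    by (rule accept_large[OF deriv lip inexact alpha])
  have Lbound: "Ls k \<le> 2 * L" for k
  proof (induction k)
    case 0 then show ?case using L0 unfolding Ls_def by simp
  next
    case (Suc k) then show ?case unfolding recL
      by (intro nextL_props(2)[OF large Lminpos Lmin2L _ Lpos])
  qed
  have Lsk: "Lmin \<le> Ls (Suc k)" "Ls (Suc k) \<le> 2 * L" "gd_accept f gt \<alpha> (x k) (Ls (Suc k))" for k
    unfolding recL using nextL_props[OF large Lminpos Lmin2L Lbound[of k] Lpos] by auto
  define c where "c = (1 - 2*\<alpha>) / (1 - \<alpha>)"
  define \<xi> where "\<xi> = (1 - 2*\<alpha>)^2"
  define e where "e k = f (x k) - f xstar" for k
  have e_nonneg: "e k \<ge> 0" for k using minimizer unfolding e_def by simp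
  have cpos: "c > 0" using alpha unfolding c_def by simp
  have gradgt: "(1 - \<alpha>) * norm (grad z) \<le> norm (gt z)" for z
    using grad_le_gt[where gt=gt and grad=grad and z=z, OF inexact[of z]] alpha by simp
  have A: "f (x (Suc k)) \<le> f (x k) - c^2 * (norm (gt (x k)))^2 / (2 * Ls (Suc k))"
   and B: "norm (x (Suc k) - x k) = c * norm (gt (x k)) / Ls (Suc k)" for k
    using accept_step[OF Lsk(3)[of k], of] Lsk(1)[of k] Lminpos alpha unfolding recx c_def by auto
  have stepnorm: "norm (x (Suc k) - x k) \<le> sqrt (2 / Lmin * e k)" for k
  proof -
    define L' where "L' = Ls (Suc k)"
    have L': "L' \<ge> Lmin" "L' > 0" using Lsk(1)[of k] Lminpos unfolding L'_def by auto
    have "L' / 2 * (norm (x (Suc k) - x k))^2 = c^2 * (norm (gt (x k)))^2 / (2 * L')"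
      unfolding B L'_def[symmetric] using L' by (simp add: power2_eq_square field_simps)
    also have "\<dots> \<le> e k - e (Suc k)" using A[of k] unfolding e_def L'_def by simp
    also have "\<dots> \<le> e k" using e_nonneg[of "Suc k"] by simp
    finally have "(norm (x (Suc k) - x k))^2 \<le> 2 * e k / L'" using L' by (simp add: field_simps)
    also have "\<dots> \<le> 2 / Lmin * e k" using L' e_nonneg[of k] Lminpos
      by (simp add: field_simps mult_right_mono)
    finally show ?thesis by (simp add: real_le_rsqrt)
  qed
  have emono: "e (Suc k) \<le> e k" for k
  proof -
    have "0 \<le> c^2 * (norm (gt (x k)))^2 / (2 * Ls (Suc k))" using Lsk(1)[of k] Lminpos by simp
    then show ?thesis using A[of k] unfolding e_def by simp
  qed
  have contr: "e (Suc k) \<le> (1 - \<xi> * \<mu> / (2 * L)) * e k" for k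
  proof -
    define L' where "L' = Ls (Suc k)"
    have L': "L' \<ge> Lmin" "L' > 0" "L' \<le> 2 * L" using Lsk(1,2)[of k] Lminpos unfolding L'_def by auto
    have "(1 - 2*\<alpha>) * norm (grad (x k)) \<le> c * norm (gt (x k))"
    proof -
      have "(1 - 2*\<alpha>) * norm (grad (x k)) = c * ((1 - \<alpha>) * norm (grad (x k)))"
        unfolding c_def using alpha by simp
      also have "\<dots> \<le> c * norm (gt (x k))" using gradgt cpos by (intro mult_left_mono) auto
      finally show ?thesis .
    qed
    then have "((1 - 2*\<alpha>) * norm (grad (x k)))^2 \<le> (c * norm (gt (x k)))^2"
      using alpha by (intro power_mono) auto
    then have g1: "\<xi> * (norm (grad (x k)))^2 \<le> c^2 * (norm (gt (x k)))^2"
      unfolding \<xi>_def by (simp add: power_mult_distrib)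
    have g2: "2 * \<mu> * e k \<le> (norm (grad (x k)))^2" using PL[of "x k"] mupos unfolding e_def
      by (simp add: field_simps)
    have xi: "\<xi> \<ge> 0" unfolding \<xi>_def by simp
    have "\<xi> * \<mu> / (2 * L) * e k \<le> \<xi> * \<mu> / L' * e k"
      using L' xi mupos e_nonneg[of k] Lpos by (intro mult_right_mono divide_left_mono) auto
    also have "\<dots> = \<xi> * (2 * \<mu> * e k) / (2 * L')" using L' by simp
    also have "\<dots> \<le> \<xi> * (norm (grad (x k)))^2 / (2 * L')"
      using g2 xi L' by (intro divide_right_mono mult_left_mono) auto
    also have "\<dots> \<le> c^2 * (norm (gt (x k)))^2 / (2 * L')"
      using g1 L' by (intro divide_right_mono) auto
    finally show ?thesis using A[of k] unfolding e_def L'_def by (simp add: algebra_simps)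
  qed
  have tele: "norm (x N - x0) \<le> (\<Sum>k<N. norm (x (Suc k) - x k))" for N
  proof (induction N)
    case 0 then show ?case using x0' by simp
  next
    case (Suc N)
    have "norm (x (Suc N) - x0) \<le> norm (x (Suc N) - x N) + norm (x N - x0)"
      by (rule order_trans[OF _ norm_triangle_ineq]) simp
    then show ?case using Suc by simp
  qed
  have Rnn: "R \<ge> 0" unfolding R_def using Lpos mupos Lminpos e_nonneg[of 0] x0' e_def
    by (simp add: \<xi>_def)
  have x0e: "e 0 = f x0 - f xstar" unfolding e_def x0' ..
  have dist_part1: "(\<forall>N. norm (x N - x0) \<le> R) \<and> f (x Nstar) - f xstar \<le> \<epsilon> / \<mu>"
  proof (cases "e 0 = 0")
    case True
    have ek0: "e k = 0" for k
    proof (induction k)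
      case 0 then show ?case using True .
    next
      case (Suc k) then show ?case using emono[of k] e_nonneg[of "Suc k"] by simp
    qed
    have "norm (x (Suc k) - x k) = 0" for k using stepnorm[of k] ek0[of k] by simp
    then have "norm (x N - x0) \<le> 0" for N using tele[of N] by simp
    then have "\<forall>N. norm (x N - x0) \<le> R" using Rnn by (meson order_trans)
    moreover have "f (x Nstar) - f xstar \<le> \<epsilon> / \<mu>" using ek0[of Nstar] eps mupos unfolding e_def by simp
    ultimately show ?thesis by blast
  next
    case False
    then have e0pos: "e 0 > 0" using e_nonneg[of 0] by simp
    define g0 where "g0 = grad x0"
    have PL0: "e 0 \<le> 1 / (2 * \<mu>) * (norm g0)^2" using PL[of x0] unfolding x0e g0_def .
    have Gpos: "(norm g0)^2 > 0"
    proof (rule ccontr)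
      assume "\<not> ?thesis" then have "(norm g0)^2 = 0" by (simp del: zero_less_power2)
      with PL0 e0pos show False by simp
    qed
    have "f (x0 - (1 / L) *\<^sub>R g0) \<le> f x0 + inner g0 ((x0 - (1 / L) *\<^sub>R g0) - x0) + L/2 * (norm ((x0 - (1 / L) *\<^sub>R g0) - x0))^2"
      unfolding g0_def by (rule descent_lemma[OF deriv lip])
    also have "\<dots> = f x0 - (norm g0)^2 / (2 * L)"
      using Lpos by (simp add: power2_norm_eq_inner[symmetric] power_mult_distrib field_simps power2_eq_square)
    finally have "(norm g0)^2 / (2 * L) \<le> e 0" using minimizer[of "x0 - (1 / L) *\<^sub>R g0"] unfolding x0e by simp
    with PL0 have "(norm g0)^2 / (2 * L) \<le> (norm g0)^2 / (2 * \<mu>)" by simp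
    then have muL: "\<mu> \<le> L" using Gpos Lpos mupos by (simp add: divide_le_cancel frac_le_eq field_simps)
    define a where "a = \<xi> * \<mu> / (2 * L)"
    have xi: "0 < \<xi>" "\<xi> \<le> 1" unfolding \<xi>_def using alpha by (auto simp: power_le_one)
    have apos: "a > 0" unfolding a_def using xi mupos Lpos by simp
    have ahalf: "a \<le> 1/2"
    proof -
      have "\<xi> * \<mu> \<le> 1 * L" using xi muL mupos by (intro mult_mono) auto
      then show ?thesis unfolding a_def using Lpos by (simp add: field_simps)
    qed
    define r where "r = 1 - a"
    have r: "0 \<le> r" "r < 1" unfolding r_def using apos ahalf by auto
    have ek: "e k \<le> r ^ k * e 0" for k
    proof (induction k)
      case 0 then show ?case by simp
    next
      case (Suc k)
      have "e (Suc k) \<le> r * e k" using contr[of k] unfolding r_def a_def .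
      also have "\<dots> \<le> r * (r ^ k * e 0)" using Suc r by (intro mult_left_mono) auto
      finally show ?case by simp
    qed
    have part1: "f (x Nstar) - f xstar \<le> \<epsilon> / \<mu>"
    proof -
      define q where "q = \<mu> * e 0 / \<epsilon>"
      have qpos: "q > 0" unfolding q_def using mupos e0pos eps by simp
      have Ns: "Nstar = nat \<lceil>ln q / a\<rceil>"
        unfolding Nstar_def q_def x0e[symmetric] a_def \<xi>_def by (simp add: field_simps)
      have "ln q / a \<le> real Nstar" unfolding Ns by linarith
      then have aN: "ln q \<le> a * real Nstar" using apos by (simp add: field_simps)
      have "r \<le> exp (- a)" unfolding r_def using exp_ge_add_one_self[of "- a"] by simp
      then have "r ^ Nstar \<le> exp (- a) ^ Nstar" using r by (intro power_mono) auto
      also have "\<dots> = exp (- (a * real Nstar))" by (simp add: exp_of_nat_mult[symmetric] mult.commute)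
      also have "\<dots> \<le> exp (- ln q)" using aN by simp
      also have "\<dots> = 1 / q" using qpos by (simp add: exp_minus inverse_eq_divide)
      finally have "r ^ Nstar * e 0 \<le> 1 / q * e 0" using e0pos by (intro mult_right_mono) auto
      also have "\<dots> = \<epsilon> / \<mu>" unfolding q_def using e0pos mupos eps by simp
      finally show ?thesis using ek[of Nstar] unfolding e_def by simp
    qed
    define S where "S = sqrt (2 / Lmin * e 0)"
    define qq where "qq = sqrt r"
    have qq: "0 \<le> qq" "qq < 1" unfolding qq_def using r by auto
    have qqa: "qq \<le> 1 - a / 2"
    proof -
      have "r \<le> (1 - a/2)^2" unfolding r_def by (simp add: power2_eq_square algebra_simps)
      then show ?thesis unfolding qq_def using ahalf by (simp add: real_le_lsqrt real_sqrt_le_iff)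
    qed
    have RS: "R = 2 / a * S" unfolding R_def S_def a_def x0e \<xi>_def by (simp add: field_simps)
    have "norm (x N - x0) \<le> R" for N
    proof -
      have "norm (x N - x0) \<le> (\<Sum>k<N. norm (x (Suc k) - x k))" by (rule tele)
      also have "\<dots> \<le> (\<Sum>k<N. S * qq ^ k)"
      proof (rule sum_mono)
        fix k
        have "2 / Lmin * e k \<le> 2 / Lmin * (r ^ k * e 0)" using ek[of k] Lminpos by (intro mult_left_mono) auto
        then have "sqrt (2 / Lmin * e k) \<le> sqrt (2 / Lmin * (r ^ k * e 0))" by simp
        also have "\<dots> = S * qq ^ k"
        proof -
          have "2 / Lmin * (r ^ k * e 0) = (2 / Lmin * e 0) * r ^ k" by simp
          then show ?thesis unfolding S_def qq_def by (simp only: real_sqrt_mult real_sqrt_power)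
        qed
        finally show "norm (x (Suc k) - x k) \<le> S * qq ^ k" using stepnorm[of k] by simp
      qed
      also have "\<dots> = S * ((1 - qq ^ N) / (1 - qq))"
        using qq by (simp add: sum_distrib_left[symmetric] sum_gp_strict)
      also have "\<dots> \<le> S * (1 / (1 - qq))"
        using qq e0pos Lminpos by (intro mult_left_mono divide_right_mono) (auto simp: S_def)
      also have "\<dots> \<le> S * (2 / a)"
        using qq qqa apos e0pos Lminpos by (intro mult_left_mono) (auto simp: S_def field_simps)
      finally show ?thesis unfolding RS by (simp add: mult.commute)
    qed
    with part1 show ?thesis by blast
  qed
  have dist: "norm (x N - x0) \<le> R" for N using dist_part1 by blast
  have part1: "f (x Nstar) - f xstar \<le> \<epsilon> / \<mu>" using dist_part1 by blast
  have part2: "f (x N) - f xstar \<le> \<epsilon> / \<mu>" if "(norm (gt (x N)))^2 \<le> 2 * \<epsilon> * (1 - \<alpha>)^2" for N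
  proof -
    have "((1 - \<alpha>) * norm (grad (x N)))^2 \<le> (norm (gt (x N)))^2"
      using gradgt[of "x N"] alpha by (intro power_mono) auto
    then have "(1 - \<alpha>)^2 * (norm (grad (x N)))^2 \<le> (norm (gt (x N)))^2"
      by (simp only: power_mult_distrib)
    with that have "(1 - \<alpha>)^2 * (norm (grad (x N)))^2 \<le> (1 - \<alpha>)^2 * (2 * \<epsilon>)"
      by (simp add: algebra_simps)
    then have "(norm (grad (x N)))^2 \<le> 2 * \<epsilon>" using alpha by simp
    then have "1 / (2 * \<mu>) * (norm (grad (x N)))^2 \<le> 1 / (2 * \<mu>) * (2 * \<epsilon>)"
      using mupos by (intro mult_left_mono) auto
    then show ?thesis using PL[of "x N"] mupos by simp
  qed
  show ?thesis using dist part1 part2 by blast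
qed

end
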